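(* Let $K$ be a field and let $f\colon\mathbb Z^k\to K$ be the characteristic function of a half-space in $\mathbb Z^k$. Then $f$ is a hypergeometric term on $\mathbb Z^k$; in fact, for every $\vec w\in\mathbb Z^k$, $f=f^{\vec w}$ almost everywhere.
   Context: $f^{\vec w}(\vec z)=f(\vec z+\vec w)$. A half-space is $\{\vec z\in\mathbb Z^k:\vec v\cdot\vec z>n\}$ with $\vec v\in\mathbb Z^k$, $n\in\mathbb Z$. A hyperplane is $\{\vec z\in\mathbb Z^k:\vec v\cdot\vec z=n\}$ with $\vec v\in\mathbb Z^k\setminus\{0\}$, $n\in\mathbb Z$; a set of measure zero is a subset covered by finitely many hyperplanes; two functions are equal almost everywhere if they agree outside a set of measure zero. A hypergeometric term on $\mathbb Z^k$ over $K$ is a function $f\colon\mathbb Z^k\to K$ such that for each $i\in\{1,\dots,k\}$ there are nonzero polynomials $A_i,B_i\in K[\vec z]$ with $A_i(\vec z)f(\vec z)=B_i(\vec z)f(\vec z+\vec e_i)$ for all $\vec z\in\mathbb Z^k$. *)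

theory Defs
  imports "HOL-Analysis.Analysis" "HOL-Library.Poly_Mapping"
begin

text \<open>Polynomials in K[z_1,...,z_k] are finitely supported maps from monomials (exponent
  vectors of type k =>0 nat) to coefficients.\<close>

type_synonym ('k, 'a) mpoly = "('k \<Rightarrow>\<^sub>0 nat) \<Rightarrow>\<^sub>0 'a"

definition mpoly_eval :: "('k::finite, 'a::comm_ring_1) mpoly \<Rightarrow> int ^ 'k \<Rightarrow> 'a" where
  "mpoly_eval p z =
     (\<Sum>m\<in>Poly_Mapping.keys p. Poly_Mapping.lookup p m * (\<Prod>i\<in>UNIV. (of_int (z $ i)) ^ Poly_Mapping.lookup (m :: 'k \<Rightarrow>\<^sub>0 nat) i))"

definition dotZ :: "int ^ 'k::finite \<Rightarrow> int ^ 'k \<Rightarrow> int" where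
  "dotZ v z = (\<Sum>i\<in>UNIV. v $ i * z $ i)"

definition unitZ :: "'k::finite \<Rightarrow> int ^ 'k" where
  "unitZ i = (\<chi> j. if j = i then 1 else 0)"

definition shiftf :: "(int ^ 'k::finite \<Rightarrow> 'a) \<Rightarrow> int ^ 'k \<Rightarrow> int ^ 'k \<Rightarrow> 'a" where
  "shiftf f w = (\<lambda>z. f (z + w))"

definition half_space :: "int ^ 'k::finite \<Rightarrow> int \<Rightarrow> (int ^ 'k) set" where
  "half_space v n = {z. dotZ v z > n}"

definition hyperplaneZ :: "int ^ 'k::finite \<Rightarrow> int \<Rightarrow> (int ^ 'k) set" where
  "hyperplaneZ v n = {z. dotZ v z = n}"

definition measure_zero :: "(int ^ 'k::finite) set \<Rightarrow> bool" where
  "measure_zero S \<longleftrightarrow> (\<exists>F. finite F \<and> (\<forall>(v, n)\<in>F. v \<noteq> 0) \<and>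
       S \<subseteq> (\<Union>(v, n)\<in>F. hyperplaneZ v n))"

definition ae_eq :: "(int ^ 'k::finite \<Rightarrow> 'a) \<Rightarrow> (int ^ 'k \<Rightarrow> 'a) \<Rightarrow> bool" where
  "ae_eq f g \<longleftrightarrow> measure_zero {z. f z \<noteq> g z}"

definition hypergeometric_term :: "(int ^ 'k::finite \<Rightarrow> 'a::field) \<Rightarrow> bool" where
  "hypergeometric_term f \<longleftrightarrow>
     (\<forall>i. \<exists>A B :: ('k, 'a) mpoly. A \<noteq> 0 \<and> B \<noteq> 0 \<and>
        (\<forall>z. mpoly_eval A z * f z = mpoly_eval B z * f (z + unitZ i)))"

end

theory Submission
  imports Defs "HOL-Computational_Algebra.Primes"
begin

definition monoZ :: "('k::finite \<Rightarrow>\<^sub>0 nat) \<Rightarrow> int ^ 'k \<Rightarrow> 'a::comm_ring_1" where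
  "monoZ m z = (\<Prod>i\<in>UNIV. (of_int (z $ i)) ^ Poly_Mapping.lookup m i)"

lemma eval_superset:
  assumes "finite S" "Poly_Mapping.keys p \<subseteq> S"
  shows "mpoly_eval p z = (\<Sum>m\<in>S. Poly_Mapping.lookup p m * monoZ m z)"
  unfolding mpoly_eval_def monoZ_def
  by (rule sum.mono_neutral_left) (use assms in \<open>auto simp: in_keys_iff\<close>)

lemma eval_add: "mpoly_eval (p + q) z = mpoly_eval p z + mpoly_eval q z"
proof -
  let ?S = "Poly_Mapping.keys p \<union> Poly_Mapping.keys q"
  have "mpoly_eval (p + q) z = (\<Sum>m\<in>?S. Poly_Mapping.lookup (p+q) m * monoZ m z)"
    by (rule eval_superset) (use keys_add[of p q] in auto)
  also have "\<dots> = (\<Sum>m\<in>?S. Poly_Mapping.lookup p m * monoZ m z) + (\<Sum>m\<in>?S. Poly_Mapping.lookup q m * monoZ m z)"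
    by (simp add: lookup_add distrib_right sum.distrib)
  also have "\<dots> = mpoly_eval p z + mpoly_eval q z"
    by (subst (1 2) eval_superset[of ?S]) auto
  finally show ?thesis .
qed

lemma eval_zero [simp]: "mpoly_eval 0 z = 0"
  by (simp add: mpoly_eval_def)

lemma eval_single: "mpoly_eval (Poly_Mapping.single m c) z = c * monoZ m z"
  by (simp add: mpoly_eval_def monoZ_def)

lemma monoZ_add: "monoZ (a + b) z = monoZ a z * monoZ b z"
  by (simp add: monoZ_def lookup_add power_add prod.distrib)

lemma monoZ_zero [simp]: "monoZ 0 z = 1"
  by (simp add: monoZ_def)

lemma pm_induct:
  assumes "P 0" "\<And>p a b. P p \<Longrightarrow> P (p + Poly_Mapping.single a b)"
  shows "P p"
proof (induction p rule: update_induct)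
  case const then show ?case using assms by simp
next
  case (update f a b)
  have "Poly_Mapping.update a b f = f + Poly_Mapping.single a b"
    using update(1)
    by (intro poly_mapping_eqI) (auto simp: lookup_update lookup_add lookup_single in_keys_iff when_def)
  then show ?case using assms(2)[OF update(3)] by simp
qed

lemma eval_mult: "mpoly_eval (p * q) z = mpoly_eval p z * mpoly_eval q z"
proof (induction p rule: pm_induct)
  case 1 then show ?case by simp
next
  case (2 p a b)
  have inner: "mpoly_eval (Poly_Mapping.single a b * q) z = mpoly_eval (Poly_Mapping.single a b) z * mpoly_eval q z"
  proof (induction q rule: pm_induct)
    case 1 then show ?case by simp
  next
    case (2 q c d)
    have "mpoly_eval (Poly_Mapping.single a b * (q + Poly_Mapping.single c d)) z
        = mpoly_eval (Poly_Mapping.single a b * q) z + (b * d) * monoZ (a + c) z"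
      by (simp only: distrib_left eval_add mult_single eval_single)
    also have "\<dots> = (b * monoZ a z) * mpoly_eval q z + (b * d) * (monoZ a z * monoZ c z)"
      by (simp only: 2 eval_single monoZ_add)
    also have "\<dots> = (b * monoZ a z) * (mpoly_eval q z + d * monoZ c z)"
      by (simp only: distrib_left mult.assoc mult.left_commute)
    finally show ?case by (simp only: eval_add eval_single)
  qed
  have "mpoly_eval ((p + Poly_Mapping.single a b) * q) z
      = mpoly_eval (p * q) z + mpoly_eval (Poly_Mapping.single a b * q) z"
    by (simp only: distrib_right eval_add)
  also have "\<dots> = mpoly_eval p z * mpoly_eval q z + mpoly_eval (Poly_Mapping.single a b) z * mpoly_eval q z"
    by (simp only: 2 inner)
  also have "\<dots> = mpoly_eval (p + Poly_Mapping.single a b) z * mpoly_eval q z"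
    by (simp only: eval_add distrib_right)
  finally show ?case .
qed

lemma eval_uminus: "mpoly_eval (- p) z = - mpoly_eval p z"
proof -
  have "mpoly_eval p z + mpoly_eval (- p) z = 0"
    using eval_add[of p "-p" z] by simp
  then show ?thesis by (metis minus_unique)
qed

lemma eval_diff: "mpoly_eval (p - q) z = mpoly_eval p z - mpoly_eval q z"
  using eval_add[of p "-q" z] eval_uminus[of q z] by simp

lemma eval_one [simp]: "mpoly_eval 1 z = 1"
  using eval_single[of 0 1 z] by simp

lemma eval_sum: "finite A \<Longrightarrow> mpoly_eval (\<Sum>x\<in>A. g x) z = (\<Sum>x\<in>A. mpoly_eval (g x) z)"
  by (induction A rule: finite_induct) (auto simp: eval_add)

lemma eval_prod: "finite A \<Longrightarrow> mpoly_eval (\<Prod>x\<in>A. g x) z = (\<Prod>x\<in>A. mpoly_eval (g x) z)"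
  by (induction A rule: finite_induct) (auto simp: eval_mult)

lemma monoZ_var: "monoZ (Poly_Mapping.single j k) z = of_int (z $ j) ^ k"
proof -
  have "monoZ (Poly_Mapping.single j k) z = (\<Prod>i\<in>UNIV. (if i = j then of_int (z $ j) ^ k else 1))"
    unfolding monoZ_def by (intro prod.cong) (auto simp: lookup_single when_def)
  then show ?thesis by simp
qed

lemma dotZ_add: "dotZ v (a + b) = dotZ v a + dotZ v b"
  by (simp add: dotZ_def distrib_left sum.distrib)

lemma dotZ_unit: "dotZ v (unitZ i) = v $ i"
proof -
  have "(\<lambda>ia. v $ ia * (unitZ i) $ ia) = (\<lambda>ia. if ia = i then v $ i else 0)"
    by (auto simp: unitZ_def)
  then have "dotZ v (unitZ i) = (\<Sum>ia\<in>UNIV. if ia = i then v $ i else 0)"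
    unfolding dotZ_def by (simp only:)
  then show ?thesis by simp
qed

lemma aux_int: "(n < (x::int)) \<noteq> (n < x + d) \<Longrightarrow> n - \<bar>d\<bar> \<le> x \<and> x \<le> n + \<bar>d\<bar>"
  by (cases "d \<ge> 0") auto

lemma frob_nat:
  assumes "prime CHAR('a::comm_ring_1)"
  shows "(of_nat k :: 'a) ^ CHAR('a) = of_nat k"
proof (induction k)
  case 0 then show ?case using assms by (simp add: prime_gt_0_nat power_0_left)
next
  case (Suc k)
  have "(of_nat (Suc k) :: 'a) ^ CHAR('a) = (of_nat k + 1) ^ CHAR('a)" by (metis of_nat_Suc add.commute)
  also have "\<dots> = of_nat k ^ CHAR('a) + 1 ^ CHAR('a)"
    by (rule freshmans_dream[OF assms refl])
  finally show ?case using Suc by (simp add: add.commute)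
qed

lemma frob_int:
  assumes "prime CHAR('a::comm_ring_1)"
  shows "(of_int x :: 'a) ^ CHAR('a) = of_int x"
proof (cases "x \<ge> 0")
  case True
  then have e: "(of_int x :: 'a) = of_nat (nat x)" by simp
  show ?thesis unfolding e by (rule frob_nat[OF assms])
next
  case False
  then have e: "(of_int x :: 'a) = - of_nat (nat (- x))" by simp
  show ?thesis unfolding e
    by (subst minus_power_prime_CHAR[OF refl assms]) (subst frob_nat[OF assms], rule refl)
qed

lemma dotZ_zero [simp]: "dotZ 0 z = 0"
  by (simp add: dotZ_def)


theorem lemmaB19:
  fixes v :: "int ^ 'k::finite" and n :: int
    and f :: "int ^ 'k \<Rightarrow> 'a::field"
  assumes "f = indicator (half_space v n)"
  shows "hypergeometric_term f \<and> (\<forall>w. ae_eq f (shiftf f w))"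
proof -
  have fval: "f z = (if dotZ v z > n then 1 else 0)" for z
    using assms by (simp add: half_space_def indicator_def)
  have H: "hypergeometric_term f"
    unfolding hypergeometric_term_def
  proof
    fix i
    define c where "c = v $ i"
    have shift: "f (z + unitZ i) = (if dotZ v z + c > n then 1 else 0)" for z
      by (simp add: fval dotZ_add dotZ_unit c_def)
    show "\<exists>A B :: ('k, 'a) mpoly. A \<noteq> 0 \<and> B \<noteq> 0 \<and>
        (\<forall>z. mpoly_eval A z * f z = mpoly_eval B z * f (z + unitZ i))"
    proof (cases "c = 0")
      case True
      have "f (z + unitZ i) = f z" for z using shift[of z] fval[of z] True by simp
      then show ?thesis by (intro exI[of _ 1]) simp
    next
      case cnz: False
      show ?thesis
      proof (cases "CHAR('a) = 0")
        case True
        define X :: "'k \<Rightarrow> ('k, 'a) mpoly" where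
          "X j = Poly_Mapping.single (Poly_Mapping.single j (1::nat)) (1::'a)" for j
        define Lp where "Lp = (\<Sum>j\<in>UNIV. Poly_Mapping.single 0 (of_int (v $ j)) * X j)"
        define R where "R = {n - \<bar>c\<bar> <.. n + \<bar>c\<bar>}"
        define Q where "Q = (\<Prod>m\<in>R. Lp - Poly_Mapping.single 0 (of_int m))"
        have finR: "finite R" by (simp add: R_def)
        have evX: "mpoly_eval (X j) z = of_int (z $ j)" for j z
          by (simp add: X_def eval_single monoZ_var)
        have evL: "mpoly_eval Lp z = of_int (dotZ v z)" for z
          by (simp add: Lp_def eval_sum eval_mult eval_single evX dotZ_def del: single_of_int)
        have evQ: "mpoly_eval Q z = (\<Prod>m\<in>R. of_int (dotZ v z - m))" for z
          by (simp add: Q_def finR eval_prod eval_diff evL eval_single del: single_of_int)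
        have ofint: "of_int x = (0::'a) \<longleftrightarrow> x = 0" for x
          using of_int_eq_0_iff_char_dvd[of x, where 'a='a] True by simp
        have Qz: "mpoly_eval Q z = 0" if "f z \<noteq> f (z + unitZ i)" for z
        proof -
          have "dotZ v z \<in> R"
            using that unfolding shift unfolding fval R_def by (auto split: if_splits)
          then show ?thesis unfolding evQ using finR by (auto simp: prod_zero_iff)
        qed
        define t where "t = c * (\<bar>n\<bar> + \<bar>c\<bar> + 1)"
        define z0 :: "int ^ 'k" where "z0 = (\<chi> j. if j = i then t else 0)"
        have dz0: "dotZ v z0 = c * t"
        proof -
          have "(\<lambda>j. v $ j * z0 $ j) = (\<lambda>j. if j = i then v $ i * t else 0)"
            by (auto simp: z0_def)
          then have "dotZ v z0 = (\<Sum>j\<in>UNIV. if j = i then v $ i * t else 0)"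
            unfolding dotZ_def by (simp only:)
          then show ?thesis by (simp add: c_def)
        qed
        have cc: "c * c \<ge> 1" using cnz
          by (metis int_one_le_iff_zero_less zero_less_mult_iff linorder_neqE_linordered_idom)
        have "c * t = (c * c) * (\<bar>n\<bar> + \<bar>c\<bar> + 1)" by (simp add: t_def)
        also have "\<dots> \<ge> 1 * (\<bar>n\<bar> + \<bar>c\<bar> + 1)"
          by (rule mult_right_mono[OF cc]) simp
        finally have big: "c * t > n + \<bar>c\<bar>" by simp
        have nz: "(of_int (c * t - m) :: 'a) \<noteq> 0" if "m \<in> R" for m
          by (subst ofint) (use that big in \<open>auto simp: R_def\<close>)
        have "mpoly_eval Q z0 \<noteq> 0"
          unfolding evQ dz0 using finR nz by (simp only: prod_zero_iff) blast
        then have Qnz: "Q \<noteq> 0" by auto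
        show ?thesis
        proof (intro exI[of _ Q] conjI allI Qnz)
          fix z
          show "mpoly_eval Q z * f z = mpoly_eval Q z * f (z + unitZ i)"
            using Qz[of z] by (cases "f z = f (z + unitZ i)") auto
        qed
      next
        case False
        define p where "p = CHAR('a)"
        have pp: "prime p" unfolding p_def using False prime_CHAR_semidom by blast
        then have p1: "p \<noteq> 1" by auto
        define P :: "('k, 'a) mpoly" where
          "P = Poly_Mapping.single (Poly_Mapping.single i p) 1 - Poly_Mapping.single (Poly_Mapping.single i 1) 1"
        have ne: "Poly_Mapping.single i p \<noteq> Poly_Mapping.single i (1::nat)"
          using p1 by (metis lookup_single_eq)
        have "Poly_Mapping.lookup P (Poly_Mapping.single i p) = 1"
          using ne by (simp add: P_def lookup_minus lookup_single when_def)
        then have Pnz: "P \<noteq> 0" by auto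
        have evP: "mpoly_eval P z = 0" for z
          using frob_int[of "z $ i", where 'a='a] pp
          by (simp add: P_def eval_diff eval_single monoZ_var p_def)
        show ?thesis
          by (intro exI[of _ P] conjI allI Pnz) (simp add: evP)
      qed
    qed
  qed
  have AE: "ae_eq f (shiftf f w)" for w
  proof -
    define d where "d = dotZ v w"
    have sh: "shiftf f w z = (if dotZ v z + d > n then 1 else 0)" for z
      by (simp add: shiftf_def fval dotZ_add d_def)
    show ?thesis
    proof (cases "v = 0")
      case True
      then have "d = 0" by (simp add: d_def)
      then have "{z. f z \<noteq> shiftf f w z} = {}" by (auto simp: sh fval True)
      then show ?thesis unfolding ae_eq_def measure_zero_def
        by (intro exI[of _ "{}"]) simp
    next
      case False
      define F where "F = (\<lambda>m. (v, m)) ` {n - \<bar>d\<bar> .. n + \<bar>d\<bar>}"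
      have "{z. f z \<noteq> shiftf f w z} \<subseteq> (\<Union>(u, m)\<in>F. hyperplaneZ u m)"
      proof
        fix z assume "z \<in> {z. f z \<noteq> shiftf f w z}"
        then have neq: "f z \<noteq> shiftf f w z" by simp
        have e1: "f z = (if n < dotZ v z then (1::'a) else 0)" by (rule fval)
        have e2: "shiftf f w z = (if n < dotZ v z + d then (1::'a) else 0)" by (rule sh)
        have "(if n < dotZ v z then (1::'a) else 0) \<noteq> (if n < dotZ v z + d then 1 else 0)"
          using neq unfolding e1 e2 .
        then have A: "(n < dotZ v z) \<noteq> (n < dotZ v z + d)"
          by (cases "n < dotZ v z"; cases "n < dotZ v z + d") simp_all
        have "n - \<bar>d\<bar> \<le> dotZ v z \<and> dotZ v z \<le> n + \<bar>d\<bar>"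
          using aux_int[OF A] .
        then have "dotZ v z \<in> {n - \<bar>d\<bar> .. n + \<bar>d\<bar>}" by simp
        then have "(v, dotZ v z) \<in> F" by (simp add: F_def)
        then show "z \<in> (\<Union>(u, m)\<in>F. hyperplaneZ u m)"
          by (auto simp: hyperplaneZ_def)
      qed
      moreover have "finite F" by (simp add: F_def)
      moreover have "\<forall>(u, m)\<in>F. u \<noteq> 0" using False by (auto simp: F_def)
      ultimately show ?thesis unfolding ae_eq_def measure_zero_def
        by (intro exI[of _ F]) (simp only:)
    qed
  qed
  show ?thesis using H AE by simp
qed

end
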